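(* Let $f:\{0,1\}^n\to\{0,1\}$, $\delta>0$, $\beta_1\ge0$, let $\mu$ be a bit-wise product probability distribution on $\{0,1\}^n$, and let $A$ be a subcube with $\mu(A)>0$ and $\mu_1(A)\le\delta\mu_0(A)$. Suppose $(w_R)$, indexed by subcubes, satisfies $w_R\ge0$, $\sum_{R\ni x}w_R\le1$ for all $x\in\{0,1\}^n$, and $\sum_{R\ni x}w_R\le\beta_1$ for all $x\in f^{-1}(0)$. Let $\mathcal B$ be the set of subcubes $B$ whose support is disjoint from the support of $A$. Then $\sum_{B\in\mathcal B}\mu_1(B)w_B\le\beta_1+\delta$.
   Context: A subcube with support $s\in\{0,1,\star\}^n$ is $\{x: s_i\ne\star\Rightarrow x_i=s_i\}$; its support is the set $\{i:s_i\in\{0,1\}\}$. For $A\subseteq\{0,1\}^n$, $\mu_z(A)=\mu(A\cap f^{-1}(z))$. Bit-wise product: $\mu(x)=\prod_i p_i(x_i)$ with $p_i(0)+p_i(1)=1$. *)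

theory Defs
  imports Complex_Main "HOL-Library.FuncSet"
begin

text \<open>Points of the cube: functions on indices 0..n-1 (True = 1, False = 0).\<close>
definition cube :: "nat \<Rightarrow> (nat \<Rightarrow> bool) set" where
  "cube n = {0..<n} \<rightarrow>\<^sub>E (UNIV :: bool set)"

text \<open>Subcube descriptors s in {0,1,*}^n: Some b = fixed bit b, None = star.\<close>
definition subcube_specs :: "nat \<Rightarrow> (nat \<Rightarrow> bool option) set" where
  "subcube_specs n = {0..<n} \<rightarrow>\<^sub>E (UNIV :: bool option set)"

definition subcube :: "nat \<Rightarrow> (nat \<Rightarrow> bool option) \<Rightarrow> (nat \<Rightarrow> bool) set" where
  "subcube n s = {x \<in> cube n. \<forall>i<n. s i \<noteq> None \<longrightarrow> x i = the (s i)}"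

definition supp :: "nat \<Rightarrow> (nat \<Rightarrow> bool option) \<Rightarrow> nat set" where
  "supp n s = {i \<in> {0..<n}. s i \<noteq> None}"

definition pmu :: "nat \<Rightarrow> (nat \<Rightarrow> bool \<Rightarrow> real) \<Rightarrow> (nat \<Rightarrow> bool) set \<Rightarrow> real" where
  "pmu n p A = (\<Sum>x\<in>A \<inter> cube n. \<Prod>i<n. p i (x i))"

definition pmu_z :: "nat \<Rightarrow> (nat \<Rightarrow> bool \<Rightarrow> real) \<Rightarrow> ((nat \<Rightarrow> bool) \<Rightarrow> bool) \<Rightarrow> bool
    \<Rightarrow> (nat \<Rightarrow> bool) set \<Rightarrow> real" where
  "pmu_z n p f z A = pmu n p (A \<inter> {x. f x = z})"

end

theory Submission
  imports Defs
begin

definition cT :: "(nat \<Rightarrow> bool option) \<Rightarrow> nat \<Rightarrow> bool set" where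
  "cT s i = (case s i of None \<Rightarrow> UNIV | Some b \<Rightarrow> {b})"

definition cw :: "(nat \<Rightarrow> bool \<Rightarrow> real) \<Rightarrow> (nat \<Rightarrow> bool option) \<Rightarrow> nat \<Rightarrow> real" where
  "cw p s i = (case s i of None \<Rightarrow> 1 | Some b \<Rightarrow> p i b)"

lemma sub_eq: "subcube n s = PiE {..<n} (cT s)"
  unfolding subcube_def cube_def cT_def
  by (auto simp: PiE_def Pi_def extensional_def split: option.splits)

lemma sub_cube: "subcube n s \<inter> cube n = subcube n s"
  unfolding subcube_def by auto

lemma pmu_sub:
  assumes "\<And>i. i < n \<Longrightarrow> p i False + p i True = 1"
  shows "pmu n p (subcube n s) = (\<Prod>i<n. cw p s i)"
proof -
  have "pmu n p (subcube n s) = (\<Sum>x\<in>PiE {..<n} (cT s). \<Prod>i<n. p i (x i))"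
    unfolding pmu_def sub_cube by (simp add: sub_eq)
  also have "\<dots> = (\<Prod>i<n. \<Sum>b\<in>cT s i. p i b)"
    by (rule prod_sum_PiE[symmetric]) auto
  also have "\<dots> = (\<Prod>i<n. cw p s i)"
  proof (rule prod.cong)
    fix i assume "i \<in> {..<n}"
    then have "p i False + p i True = 1" using assms by simp
    then show "(\<Sum>b\<in>cT s i. p i b) = cw p s i"
      unfolding cT_def cw_def by (auto split: option.splits simp: UNIV_bool)
  qed simp
  finally show ?thesis .
qed

definition merge :: "(nat \<Rightarrow> bool option) \<Rightarrow> (nat \<Rightarrow> bool option) \<Rightarrow> nat \<Rightarrow> bool option" where
  "merge B a i = (case B i of None \<Rightarrow> a i | Some b \<Rightarrow> Some b)"

lemma inter_eq:
  assumes "supp n B \<inter> supp n a = {}"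
  shows "subcube n B \<inter> subcube n a = subcube n (merge B a)"
  using assms unfolding subcube_def supp_def merge_def
  by (auto split: option.splits)

lemma pmu_inter:
  assumes "\<And>i. i < n \<Longrightarrow> p i False + p i True = 1"
    and "supp n B \<inter> supp n a = {}"
  shows "pmu n p (subcube n B \<inter> subcube n a) = pmu n p (subcube n B) * pmu n p (subcube n a)"
proof -
  have P: "\<And>s. pmu n p (subcube n s) = (\<Prod>i<n. cw p s i)"
    using pmu_sub[of n p] assms(1) by blast
  have "pmu n p (subcube n B \<inter> subcube n a) = (\<Prod>i<n. cw p (merge B a) i)"
    using inter_eq[OF assms(2)] P by simp
  also have "\<dots> = (\<Prod>i<n. cw p B i * cw p a i)"
  proof (rule prod.cong)
    fix i assume "i \<in> {..<n}"
    then have "B i = None \<or> a i = None" using assms(2) unfolding supp_def by auto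
    then show "cw p (merge B a) i = cw p B i * cw p a i"
      unfolding cw_def merge_def by (auto split: option.splits)
  qed simp
  also have "\<dots> = pmu n p (subcube n B) * pmu n p (subcube n a)"
    using P by (simp add: prod.distrib)
  finally show ?thesis .
qed

lemma sum_part:
  assumes "finite A"
  shows "(\<Sum>x\<in>A. g x) = (\<Sum>x\<in>{x\<in>A. P x}. g x) + (\<Sum>x\<in>{x\<in>A. \<not> P x}. g x)"
proof -
  have "A = {x\<in>A. P x} \<union> {x\<in>A. \<not> P x}" by auto
  then have "(\<Sum>x\<in>A. g x) = (\<Sum>x\<in>{x\<in>A. P x} \<union> {x\<in>A. \<not> P x}. g x)" by simp
  also have "\<dots> = (\<Sum>x\<in>{x\<in>A. P x}. g x) + (\<Sum>x\<in>{x\<in>A. \<not> P x}. g x)"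
    using assms by (intro sum.union_disjoint) auto
  finally show ?thesis .
qed

theorem mainTheorem13:
  fixes n :: nat and f :: "(nat \<Rightarrow> bool) \<Rightarrow> bool" and \<delta> \<beta>1 :: real
    and p :: "nat \<Rightarrow> bool \<Rightarrow> real" and a :: "nat \<Rightarrow> bool option"
    and w :: "(nat \<Rightarrow> bool option) \<Rightarrow> real"
  assumes "\<delta> > 0" and "\<beta>1 \<ge> 0"
    and "\<And>i b. i < n \<Longrightarrow> p i b \<ge> 0"
    and "\<And>i. i < n \<Longrightarrow> p i False + p i True = 1"
    and "a \<in> subcube_specs n"
    and "pmu n p (subcube n a) > 0"
    and "pmu_z n p f True (subcube n a) \<le> \<delta> * pmu_z n p f False (subcube n a)"
    and "\<And>R. R \<in> subcube_specs n \<Longrightarrow> w R \<ge> 0"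
    and "\<And>x. x \<in> cube n \<Longrightarrow> (\<Sum>R\<in>{R \<in> subcube_specs n. x \<in> subcube n R}. w R) \<le> 1"
    and "\<And>x. x \<in> cube n \<Longrightarrow> \<not> f x \<Longrightarrow>
           (\<Sum>R\<in>{R \<in> subcube_specs n. x \<in> subcube n R}. w R) \<le> \<beta>1"
  shows "(\<Sum>B\<in>{B \<in> subcube_specs n. supp n B \<inter> supp n a = {}}.
            pmu_z n p f True (subcube n B) * w B) \<le> \<beta>1 + \<delta>"
proof -
  define m where "m x = (\<Prod>i<n. p i (x i))" for x :: "nat \<Rightarrow> bool"
  define S where "S = subcube_specs n"
  define BB where "BB = {B \<in> S. supp n B \<inter> supp n a = {}}"
  define A where "A = subcube n a"
  have finS: "finite S" unfolding S_def subcube_specs_def by (intro finite_PiE) auto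
  have finBB: "finite BB" using finS unfolding BB_def by simp
  have fincube: "finite (cube n)" unfolding cube_def by (intro finite_PiE) auto
  have finA: "finite A" unfolding A_def sub_eq by (intro finite_PiE) auto
  have Acube: "A \<subseteq> cube n" unfolding A_def subcube_def by auto
  have mnn: "x \<in> cube n \<Longrightarrow> m x \<ge> 0" for x
    unfolding m_def using assms(3) by (auto intro: prod_nonneg)
  have pmu_eq: "pmu n p X = (\<Sum>x\<in>X \<inter> cube n. m x)" for X
    unfolding pmu_def m_def ..
  have pmu_mono: "pmu n p X \<le> pmu n p Y" if "X \<subseteq> Y" for X Y
    unfolding pmu_eq using that fincube mnn
    by (intro sum_mono2) auto
  let ?mA = "pmu n p A"
  have mApos: "?mA > 0" using assms(6) unfolding A_def .
  have wnn: "B \<in> BB \<Longrightarrow> w B \<ge> 0" for B using assms(8) unfolding BB_def S_def by auto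
  have step1: "(\<Sum>B\<in>BB. pmu_z n p f True (subcube n B) * w B) * ?mA
      \<le> (\<Sum>B\<in>BB. pmu n p (subcube n B \<inter> A) * w B)"
  proof -
    have "(\<Sum>B\<in>BB. pmu_z n p f True (subcube n B) * w B) * ?mA
        = (\<Sum>B\<in>BB. pmu_z n p f True (subcube n B) * w B * ?mA)"
      by (simp add: sum_distrib_right)
    also have "\<dots> \<le> (\<Sum>B\<in>BB. pmu n p (subcube n B \<inter> A) * w B)"
    proof (rule sum_mono)
      fix B assume B: "B \<in> BB"
      have "pmu_z n p f True (subcube n B) \<le> pmu n p (subcube n B)"
        unfolding pmu_z_def by (rule pmu_mono) auto
      then have "pmu_z n p f True (subcube n B) * w B * ?mA \<le> pmu n p (subcube n B) * w B * ?mA"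
        using wnn[OF B] mApos by (intro mult_right_mono) auto
      also have "\<dots> = pmu n p (subcube n B \<inter> A) * w B"
        using pmu_inter[of n p B a] assms(4) B unfolding BB_def A_def by simp
      finally show "pmu_z n p f True (subcube n B) * w B * ?mA \<le> pmu n p (subcube n B \<inter> A) * w B" .
    qed
    finally show ?thesis .
  qed
  have step2: "(\<Sum>B\<in>BB. pmu n p (subcube n B \<inter> A) * w B)
      = (\<Sum>x\<in>A. m x * (\<Sum>B\<in>{B\<in>BB. x \<in> subcube n B}. w B))"
  proof -
    have "(\<Sum>B\<in>BB. pmu n p (subcube n B \<inter> A) * w B)
        = (\<Sum>B\<in>BB. \<Sum>x\<in>A. (if x \<in> subcube n B then m x * w B else 0))"
    proof (rule sum.cong)
      fix B assume "B \<in> BB"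
      have "subcube n B \<inter> A \<inter> cube n = {x\<in>A. x \<in> subcube n B}" using Acube by auto
      then have "pmu n p (subcube n B \<inter> A) = (\<Sum>x\<in>{x\<in>A. x \<in> subcube n B}. m x)"
        unfolding pmu_eq by simp
      also have "\<dots> = (\<Sum>x\<in>A. if x \<in> subcube n B then m x else 0)"
        using finA by (simp add: sum.inter_filter)
      finally show "pmu n p (subcube n B \<inter> A) * w B = (\<Sum>x\<in>A. (if x \<in> subcube n B then m x * w B else 0))"
        by (auto simp add: sum_distrib_right intro!: sum.cong)
    qed simp
    also have "\<dots> = (\<Sum>x\<in>A. \<Sum>B\<in>BB. (if x \<in> subcube n B then m x * w B else 0))"
      by (rule sum.swap)
    also have "\<dots> = (\<Sum>x\<in>A. m x * (\<Sum>B\<in>{B\<in>BB. x \<in> subcube n B}. w B))"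
    proof (rule sum.cong)
      fix x assume "x \<in> A"
      have "(\<Sum>B\<in>BB. (if x \<in> subcube n B then m x * w B else 0)) = (\<Sum>B\<in>{B\<in>BB. x \<in> subcube n B}. m x * w B)"
        using finBB by (simp add: sum.inter_filter)
      then show "(\<Sum>B\<in>BB. (if x \<in> subcube n B then m x * w B else 0)) = m x * (\<Sum>B\<in>{B\<in>BB. x \<in> subcube n B}. w B)"
        by (simp add: sum_distrib_left)
    qed simp
    finally show ?thesis .
  qed
  have step3: "(\<Sum>x\<in>A. m x * (\<Sum>B\<in>{B\<in>BB. x \<in> subcube n B}. w B))
      \<le> (\<Sum>x\<in>A. m x * (if f x then 1 else \<beta>1))"
  proof (rule sum_mono)
    fix x assume xA: "x \<in> A"
    then have xc: "x \<in> cube n" using Acube by auto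
    have "(\<Sum>B\<in>{B\<in>BB. x \<in> subcube n B}. w B) \<le> (\<Sum>R\<in>{R \<in> subcube_specs n. x \<in> subcube n R}. w R)"
      using finS assms(8) unfolding BB_def S_def by (intro sum_mono2) auto
    also have "\<dots> \<le> (if f x then 1 else \<beta>1)"
      using assms(9)[OF xc] assms(10)[OF xc] by auto
    finally show "m x * (\<Sum>B\<in>{B\<in>BB. x \<in> subcube n B}. w B) \<le> m x * (if f x then 1 else \<beta>1)"
      using mnn[OF xc] by (rule mult_left_mono)
  qed
  define m1 where "m1 = pmu_z n p f True A"
  define m0 where "m0 = pmu_z n p f False A"
  have sumA: "(\<Sum>x\<in>A. m x * (if f x then 1 else \<beta>1)) = m1 + \<beta>1 * m0"
  proof -
    have e1: "m1 = (\<Sum>x\<in>{x\<in>A. f x}. m x)" unfolding m1_def pmu_z_def pmu_eq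
      using Acube by (intro sum.cong) auto
    have e0: "m0 = (\<Sum>x\<in>{x\<in>A. \<not> f x}. m x)" unfolding m0_def pmu_z_def pmu_eq
      using Acube by (intro sum.cong) auto
    have "(\<Sum>x\<in>A. m x * (if f x then 1 else \<beta>1))
        = (\<Sum>x\<in>{x\<in>A. f x}. m x * (if f x then 1 else \<beta>1)) + (\<Sum>x\<in>{x\<in>A. \<not> f x}. m x * (if f x then 1 else \<beta>1))"
      using finA by (rule sum_part)
    also have "\<dots> = m1 + \<beta>1 * m0" unfolding e1 e0 by (simp add: sum_distrib_left mult.commute)
    finally show ?thesis .
  qed
  have mAeq: "?mA = m0 + m1"
  proof -
    have "?mA = (\<Sum>x\<in>A. m x)" unfolding pmu_eq using Acube by (simp add: Int_absorb2)
    also have "\<dots> = (\<Sum>x\<in>{x\<in>A. f x}. m x) + (\<Sum>x\<in>{x\<in>A. \<not> f x}. m x)"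
      using finA by (rule sum_part)
    also have "(\<Sum>x\<in>{x\<in>A. f x}. m x) = m1" unfolding m1_def pmu_z_def pmu_eq
      using Acube by (intro sum.cong) auto
    also have "(\<Sum>x\<in>{x\<in>A. \<not> f x}. m x) = m0" unfolding m0_def pmu_z_def pmu_eq
      using Acube by (intro sum.cong) auto
    finally show ?thesis by simp
  qed
  have m0nn: "m0 \<ge> 0" unfolding m0_def pmu_z_def pmu_eq using mnn by (intro sum_nonneg) auto
  have m1nn: "m1 \<ge> 0" unfolding m1_def pmu_z_def pmu_eq using mnn by (intro sum_nonneg) auto
  have m1le: "m1 \<le> \<delta> * m0" using assms(7) unfolding m1_def m0_def A_def .
  have fin: "m1 + \<beta>1 * m0 \<le> (\<beta>1 + \<delta>) * ?mA"
    unfolding mAeq using m1le m0nn m1nn assms(1,2)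
    by (smt (verit) distrib_left distrib_right mult_nonneg_nonneg)
  have "(\<Sum>B\<in>BB. pmu_z n p f True (subcube n B) * w B) * ?mA \<le> (\<beta>1 + \<delta>) * ?mA"
    using step1 step2 step3 sumA fin by linarith
  then have "(\<Sum>B\<in>BB. pmu_z n p f True (subcube n B) * w B) \<le> \<beta>1 + \<delta>"
    using mApos by simp
  then show ?thesis unfolding BB_def S_def .
qed

end
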